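(* For any $i\le r-2$ the divisor $X_i$ restricted to the $L$-resolution is equal to the divisor $X^L_j$, where $j=(i \bmod (r-a))$, and the divisor $X_i$ restricted to the $R$-resolution is equal to the divisor $X^R_j$, where $j=(i \bmod a)$.
   Context: Let $0<a<r$ be coprime integers, $b$ the inverse of $a$ modulo $r$, and for integers $s,t$ let $(s \bmod t)$ denote the least non-negative integer $u$ with $t\mid s-u$. Let $N=\mathbb{Z}^3+\mathbb{Z}\frac1r(1,a,r-a)$, and $p_i=\frac1r\big((-ib \bmod r),\,r-i,\,i\big)$ for $i=0,\ldots,r$ (so $p_0=e_2$, $p_r=e_3$, $p_{r-a}=\frac1r(1,a,r-a)$). The Danilov resolution of the toric singularity $\frac1r(1,a,r-a)$ (cone $\langle e_1,e_2,e_3\rangle$ in $N$) is obtained by the weighted blow-up at $p_{r-a}$ followed recursively by the Danilov resolutions of the cones $\langle e_1,e_2,p_{r-a}\rangle$ and $\langle e_1,e_3,p_{r-a}\rangle$, which are toric singularities of type $\frac{1}{r-a}(1,(r \bmod (r-a)),(-r \bmod (r-a)))$ and $\frac1a(1,(-r \bmod a),(r \bmod a))$ respectively; their resolutions are called the $L$-resolution and the $R$-resolution. Let $D_k$ be the toric divisor of the ray through $p_k$ and $E_1$ the toric divisor of the ray through $e_1$. The permutation $\tau(r,a,\cdot)$ of $\{0,\ldots,r-1\}$ is defined recursively: if $a\in\{1,r-1\}$, $\tau(r,a,i)=(ai-1 \bmod r)$; otherwise $\tau(r,a,i)=\tau(r-a,(r\bmod (r-a)),(i \bmod (r-a)))$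 if $i\ge a$, and $\tau(r,a,i)=(r-a)+\tau(a,(-r \bmod a),i)$ if $i<a$. Set $Z_i=\sum_{k=\tau(r,a,i)+1}^{r}D_k$, and define divisors $X_i$ ($i=0,\ldots,r-1$, indices modulo $r$) by $X_i+Z_{i+1}=Z_i+X_{i-a}$ for all $i$ and $X_0=E_1$. The divisors $X^L_j$ (resp. $X^R_j$) on the $L$- (resp. $R$-)resolution are defined by the same construction with $(r,a)$ replaced by $(r-a,(r\bmod(r-a)))$ (resp. $(a,(-r\bmod a))$). *)

theory Defs
  imports Main
begin

text \<open>Labels of the torus-invariant prime divisors of the Danilov resolution of
  the singularity 1/r(1,a,r-a): E1 is the divisor of the ray through e1, and
  D k is the divisor D_k of the ray through p_k (0 <= k <= r).\<close>

datatype tlabel = E1 | D int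

type_synonym tdivisor = "tlabel \<Rightarrow> int"

text \<open>The permutation tau(r,a,.) (all mod operations are least non-negative
  residues, which is Isabelle's int mod for positive modulus).  Outside the
  meaningful range 0 < a < r it is set to 0 (irrelevant convention).\<close>

function tau :: "int \<Rightarrow> int \<Rightarrow> int \<Rightarrow> int" where
  "tau r a i =
     (if a = 1 \<or> a = r - 1 then (a * i - 1) mod r
      else if a \<le> 0 \<or> r \<le> a then 0
      else if a \<le> i then tau (r - a) (r mod (r - a)) (i mod (r - a))
      else (r - a) + tau a ((- r) mod a) i)"
  by pat_completeness auto
termination
  by (relation "measure (\<lambda>(r, a, i). nat r)") auto

definition Ediv :: tdivisor where
  "Ediv = (\<lambda>l. case l of E1 \<Rightarrow> 1 | D k \<Rightarrow> 0)"

definition Zdiv :: "int \<Rightarrow> int \<Rightarrow> int \<Rightarrow> tdivisor" where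
  "Zdiv r a i = (\<lambda>l. case l of E1 \<Rightarrow> 0
                   | D k \<Rightarrow> (if tau r a i + 1 \<le> k \<and> k \<le> r then 1 else 0))"

definition Xsys :: "int \<Rightarrow> int \<Rightarrow> (int \<Rightarrow> tdivisor) \<Rightarrow> bool" where
  "Xsys r a X \<longleftrightarrow>
     X 0 = Ediv \<and>
     (\<forall>i. 0 \<le> i \<and> i < r \<longrightarrow>
        (\<forall>l. X i l + Zdiv r a ((i + 1) mod r) l = Zdiv r a i l + X ((i - a) mod r) l)) \<and>
     (\<forall>i. \<not> (0 \<le> i \<and> i < r) \<longrightarrow> X i = (\<lambda>l. 0))"

definition Xdiv :: "int \<Rightarrow> int \<Rightarrow> int \<Rightarrow> tdivisor" where
  "Xdiv r a = (THE X. Xsys r a X)"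

text \<open>Restriction to the L-resolution (the open toric subvariety given by the
  subfan in the cone <e1,e2,p_{r-a}>, whose rays are e1, p_0, ..., p_{r-a}).
  Under the lattice isomorphism identifying this cone with the standard cone of
  1/(r-a)(1, r mod (r-a), -r mod (r-a)) (e1, e2, p_{r-a} |-> e1, e2, e3),
  p_k corresponds to p^L_k, so D_k restricts to D^L_k (k <= r-a) and E_1 to E^L_1;
  the result is expressed in the labels of the L-resolution.\<close>
definition restrL :: "int \<Rightarrow> int \<Rightarrow> tdivisor \<Rightarrow> tdivisor" where
  "restrL r a X = (\<lambda>l. case l of E1 \<Rightarrow> X E1
                   | D k \<Rightarrow> (if 0 \<le> k \<and> k \<le> r - a then X (D k) else 0))"

text \<open>Restriction to the R-resolution (subfan in the cone <e1,p_{r-a},e3>, rays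
  e1, p_{r-a}, ..., p_r).  Under the identification with the standard cone of
  1/a(1, -r mod a, r mod a) (e1, p_{r-a}, e3 |-> e1, e2, e3), p_{r-a+k}
  corresponds to p^R_k, so D_{r-a+k} restricts to D^R_k and E_1 to E^R_1.\<close>
definition restrR :: "int \<Rightarrow> int \<Rightarrow> tdivisor \<Rightarrow> tdivisor" where
  "restrR r a X = (\<lambda>l. case l of E1 \<Rightarrow> X E1
                   | D k \<Rightarrow> (if 0 \<le> k \<and> k \<le> a then X (D (r - a + k)) else 0))"

end

theory Submission
  imports Defs "HOL-Number_Theory.Cong"
begin



lemma inv_ex:
  fixes a r :: int
  assumes "coprime a r"
  obtains b where "(a*b) mod r = 1 mod r"
  using cong_solve_coprime_int[OF assms] unfolding cong_def by blast

lemma mul_inv_mod: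
  fixes a r b x :: int
  assumes "(a*b) mod r = 1 mod r"
  shows "((x mod r) * b * a) mod r = x mod r"
proof -
  have "((x mod r) * b * a) mod r = ((x mod r) * (a * b)) mod r"
    by (simp add: ac_simps)
  also have "\<dots> = (x * (a * b)) mod r" by (simp add: mod_mult_left_eq)
  also have "\<dots> = (x * ((a * b) mod r)) mod r" by (simp add: mod_simps)
  also have "\<dots> = x mod r" using assms by (simp add: mod_simps)
  finally show ?thesis .
qed

lemma cancel_mod:
  fixes a r b x y :: int
  assumes "(a*b) mod r = 1 mod r" "(x*a) mod r = (y*a) mod r"
  shows "x mod r = y mod r"
proof -
  have "(x * (a*b)) mod r = (y * (a*b)) mod r"
    using assms(2) by (metis mod_mult_left_eq mult.assoc mult.commute)
  then show ?thesis using assms(1) by (metis mod_mult_right_eq mult.right_neutral)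
qed

lemma prop_full:
  fixes Y :: "int \<Rightarrow> 'b" and r a :: int
  assumes r: "0 < r" and cop: "coprime a r" and Y0: "Y 0 = c"
    and st: "\<And>i. 0 \<le> i \<Longrightarrow> i < r \<Longrightarrow> Y i = Y ((i - a) mod r)"
    and i: "0 \<le> i" "i < r"
  shows "Y i = c"
proof -
  obtain b where b: "(a*b) mod r = 1 mod r" using inv_ex[OF cop] by blast
  have step: "Y ((int n * a) mod r) = c" for n :: nat
  proof (induction n)
    case 0 then show ?case using Y0 by simp
  next
    case (Suc n)
    have "Y ((int (Suc n) * a) mod r) = Y (((int (Suc n) * a) mod r - a) mod r)"
      by (rule st) (use r in auto)
    also have "((int (Suc n) * a) mod r - a) mod r = (int n * a) mod r"
    proof -
      have "int (Suc n) * a - a = int n * a" by (simp add: algebra_simps)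
      then show ?thesis by (metis mod_diff_left_eq)
    qed
    finally show ?case using Suc by simp
  qed
  have im: "i mod r = i" using i by simp
  have "int (nat ((i*b) mod r)) = (i*b) mod r" using r by simp
  moreover have "(((i*b) mod r) * a) mod r = i"
  proof -
    have "(((i*b) mod r) * a) mod r = (i*b*a) mod r" by (simp add: mod_mult_left_eq)
    also have "\<dots> = ((i mod r)*b*a) mod r" unfolding im ..
    also have "\<dots> = i" using mul_inv_mod[OF b, of i] im by simp
    finally show ?thesis .
  qed
  ultimately have "(int (nat ((i*b) mod r)) * a) mod r = i" by simp
  then show ?thesis using step[of "nat ((i*b) mod r)"] by simp
qed

lemma neg_mod_eq:
  fixes k r :: int
  assumes "0 < k" "k < r"
  shows "(- k) mod r = r - k"
proof -
  show ?thesis using assms by (simp add: zmod_zminus1_eq_if)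
qed

lemma prop_exc:
  fixes Y :: "int \<Rightarrow> 'b" and r a :: int
  assumes r: "1 < r" and a: "0 < a" "a < r" and cop: "coprime a r" and Y0: "Y 0 = c"
    and st: "\<And>i. 0 \<le> i \<Longrightarrow> i < r \<Longrightarrow> i \<noteq> r - 1 \<Longrightarrow> i \<noteq> a - 1 \<Longrightarrow> Y i = Y ((i - a) mod r)"
    and i: "0 \<le> i" "i \<le> r - 2"
  shows "Y i = c"
proof -
  obtain b where b: "(a*b) mod r = 1 mod r" using inv_ex[OF cop] by blast
  define N where "N = ((r-1)*b) mod r"
  have N0: "0 \<le> N" "N < r" using r by (auto simp: N_def)
  have NA: "(N*a) mod r = r - 1"
  proof -
    have e: "(r-1) mod r = r-1" using r neg_mod_eq[of 1 r] by simp
    have "(N*a) mod r = ((r-1)*b*a) mod r" unfolding N_def by (simp add: mod_mult_left_eq)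
    also have "\<dots> = r - 1" using mul_inv_mod[OF b, of "r-1"] unfolding e .
    finally show ?thesis .
  qed
  have N1: "1 \<le> N"
  proof (rule ccontr)
    assume "\<not> 1 \<le> N" then have "N = 0" using N0 by simp
    then show False using NA r by simp
  qed
  have canc: "x = y" if "(x*a) mod r = (y*a) mod r" "0 \<le> x" "x < r" "0 \<le> y" "y < r" for x y
    using cancel_mod[OF b that(1)] that by simp
  have fwd: "int n < N \<Longrightarrow> Y ((int n * a) mod r) = c" for n :: nat
  proof (induction n)
    case 0 then show ?case using Y0 by simp
  next
    case (Suc n)
    define i' where "i' = (int (Suc n) * a) mod r"
    have i'r: "0 \<le> i'" "i' < r" using r by (auto simp: i'_def)
    have sh: "(i' - a) mod r = (int n * a) mod r"
    proof -
      have "int (Suc n) * a - a = int n * a" by (simp add: algebra_simps)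
      then show ?thesis unfolding i'_def by (metis mod_diff_left_eq)
    qed
    have ne1: "i' \<noteq> r - 1"
    proof
      assume "i' = r - 1"
      then have "(int (Suc n) * a) mod r = (N*a) mod r" using NA i'_def by simp
      then have "int (Suc n) = N" using canc[of "int (Suc n)" N] Suc.prems N0 by linarith
      then show False using Suc.prems by simp
    qed
    have ne2: "i' \<noteq> a - 1"
    proof
      assume "i' = a - 1"
      then have "(int n * a) mod r = (N*a) mod r" using NA sh r a neg_mod_eq[of 1 r] by (simp add: mod_simps)
      then have "int n = N" using canc[of "int n" N] Suc.prems N0 by linarith
      then show False using Suc.prems by simp
    qed
    have "Y i' = Y ((i' - a) mod r)" using st i'r ne1 ne2 by blast
    then show ?case using Suc sh i'_def by simp
  qed
  have bwd: "int k \<le> r - 1 - N \<Longrightarrow> Y ((- int k * a) mod r) = c" for k :: nat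
  proof (induction k)
    case 0 then show ?case using Y0 by simp
  next
    case (Suc k)
    define i' where "i' = (- int k * a) mod r"
    have i'r: "0 \<le> i'" "i' < r" using r by (auto simp: i'_def)
    have sh: "(i' - a) mod r = (- int (Suc k) * a) mod r"
    proof -
      have "- int k * a - a = - int (Suc k) * a" by (simp add: algebra_simps)
      then show ?thesis unfolding i'_def by (metis mod_diff_left_eq)
    qed
    have ne1: "i' \<noteq> r - 1"
    proof
      assume "i' = r - 1"
      then have "(((- int k) mod r) * a) mod r = (N*a) mod r" using NA i'_def by (simp add: mod_simps)
      then have "(- int k) mod r = N" using canc[of "(- int k) mod r" N] N0 r by simp
      moreover have "k \<noteq> 0" using \<open>(- int k) mod r = N\<close> N1 by (cases k) auto
      ultimately have "r - int k = N" using neg_mod_eq[of "int k" r] Suc.prems N1 by simp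
      then show False using Suc.prems by simp
    qed
    have ne2: "i' \<noteq> a - 1"
    proof
      assume "i' = a - 1"
      then have "(- int (Suc k) * a) mod r = (N*a) mod r" using NA sh r a neg_mod_eq[of 1 r] by (simp add: mod_simps)
      then have "(((- int (Suc k)) mod r) * a) mod r = (N*a) mod r" by (simp add: mod_simps)
      then have "(- int (Suc k)) mod r = N" using canc[of "(- int (Suc k)) mod r" N] N0 r by simp
      then have "r - int (Suc k) = N" using neg_mod_eq[of "int (Suc k)" r] Suc.prems N1 by simp
      then show False using Suc.prems by simp
    qed
    have "Y i' = Y ((i' - a) mod r)" using st i'r ne1 ne2 by blast
    then show ?case using Suc sh i'_def by simp
  qed
  define n where "n = (i*b) mod r"
  have n0: "0 \<le> n" "n < r" using r by (auto simp: n_def)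
  have ni: "(n*a) mod r = i" using mul_inv_mod[OF b, of i] i by (simp add: n_def mod_mult_left_eq)
  have "n \<noteq> N" using ni NA i by auto
  show ?thesis
  proof (cases "n < N")
    case True
    have k: "int (nat n) = n" using n0 by simp
    have "Y ((int (nat n) * a) mod r) = c" using fwd[of "nat n"] k True by simp
    then show ?thesis unfolding k ni .
  next
    case False
    then have "N < n" using \<open>n \<noteq> N\<close> by simp
    have "- (r - n) * a = n * a + (- a) * r" by (simp add: algebra_simps)
    then have e: "(- (r - n) * a) mod r = (n*a) mod r" by (simp only: mod_mult_self1)
    have k: "int (nat (r - n)) = r - n" "r - n \<le> r - 1 - N" using n0 \<open>N < n\<close> by auto
    have "Y ((- int (nat (r - n)) * a) mod r) = c" using bwd[of "nat (r - n)"] k by simp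
    then show ?thesis unfolding k(1) e ni .
  qed
qed




declare tau.simps[simp del]

lemma tau_range: "0 < r \<Longrightarrow> 0 \<le> tau r a i \<and> tau r a i < r"
proof (induction r a i rule: tau.induct)
  case (1 r a i)
  show ?case
  proof (cases "a = 1 \<or> a = r - 1")
    case True
    have "tau r a i = (a * i - 1) mod r" using True by (subst tau.simps) simp
    then show ?thesis using "1.prems" by simp
  next
    case F1: False
    show ?thesis
    proof (cases "a \<le> 0 \<or> r \<le> a")
      case True
      have "tau r a i = 0" using True F1 by (subst tau.simps) simp
      then show ?thesis using "1.prems" by simp
    next
      case F2: False
      show ?thesis
      proof (cases "a \<le> i")
        case True
        have "tau r a i = tau (r - a) (r mod (r - a)) (i mod (r - a))"
          using F1 F2 True by (subst tau.simps) simp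
        then show ?thesis using "1.IH"(1)[OF F1 F2 True] F2 by simp
      next
        case F3: False
        have "tau r a i = (r - a) + tau a ((- r) mod a) i"
          using F1 F2 F3 by (subst tau.simps) simp
        then show ?thesis using "1.IH"(2)[OF F1 F2 F3] F2 by simp
      qed
    qed
  qed
qed

lemma modeq: fixes x r q m :: int shows "0 \<le> m \<Longrightarrow> m < r \<Longrightarrow> x = r*q + m \<Longrightarrow> x mod r = m"
  by simp

lemma tau_b1: "tau r 1 i = (i - 1) mod r"
  by (subst tau.simps) simp

lemma tau_b2: "tau r (r - 1) i = ((r - 1) * i - 1) mod r"
  by (subst tau.simps) simp

lemma tau_one: "tau 1 0 i = 0"
  by (subst tau.simps) simp

lemma tau_gen: "a \<noteq> 1 \<Longrightarrow> a \<noteq> r - 1 \<Longrightarrow> 0 < a \<Longrightarrow> a < r \<Longrightarrow>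
  tau r a i = (if a \<le> i then tau (r - a) (r mod (r - a)) (i mod (r - a))
      else (r - a) + tau a ((- r) mod a) i)"
  by (subst tau.simps) simp

lemma tau_L:
  fixes r a i :: int
  assumes "0 < a" "a < r" "a \<le> i" "i < r"
  shows "tau r a i = tau (r - a) (r mod (r - a)) (i mod (r - a))"
proof (cases "a = 1")
  case True
  have l: "tau r a i = i - 1"
    using assms True tau_b1[of r i] by (simp add: modeq[where q=0])
  show ?thesis
  proof (cases "r = 2")
    case True
    then have "r - a = 1" "r mod (r - a) = 0" "i = 1" using assms \<open>a = 1\<close> by auto
    then show ?thesis using l tau_one by simp
  next
    case False
    then have m: "r mod (r - a) = 1" using \<open>a = 1\<close> assms modeq[of 1 "r-1" r 1] by simp
    have R: "tau (r - a) (r mod (r - a)) (i mod (r - a)) = (i mod (r - 1) - 1) mod (r - 1)"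
      using m tau_b1[of "r - 1" "i mod (r - 1)"] \<open>a = 1\<close> by simp
    show ?thesis
    proof (cases "i = r - 1")
      case True
      have "2 < r" using \<open>r \<noteq> 2\<close> \<open>a = 1\<close> assms by simp
      then show ?thesis using True l R neg_mod_eq[of 1 "r - 1"] by simp
    next
      case False
      then have "i mod (r - 1) = i" using assms \<open>a = 1\<close> by simp
      then show ?thesis using l R assms False \<open>a = 1\<close> by simp
    qed
  qed
next
  case F1: False
  show ?thesis
  proof (cases "a = r - 1")
    case True
    then have i: "i = r - 1" using assms by simp
    have e: "((r-1)*(r-1) - 1) mod r = 0"
      by (rule modeq[where q="r-2"]) (use assms in \<open>auto simp: algebra_simps\<close>)
    have "tau r a i = 0"
      using True i e tau_b2[of r i] by simp
    moreover have "r - a = 1" "r mod (r - a) = 0" using True by auto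
    ultimately show ?thesis using tau_one by simp
  next
    case False
    then show ?thesis using F1 assms tau_gen[of a r i] by simp
  qed
qed

lemma tau_R:
  fixes r a i :: int
  assumes "0 < a" "a < r" "0 \<le> i" "i < a"
  shows "tau r a i = (r - a) + tau a ((- r) mod a) i"
proof (cases "a = 1")
  case True
  then have i: "i = 0" using assms by simp
  have "tau r 1 0 = r - 1" using neg_mod_eq[of 1 r] assms tau_b1[of r 0] by simp
  then have "tau r a i = r - 1" using True i by simp
  moreover have "(- r) mod a = 0" using True by simp
  ultimately show ?thesis using True tau_one by simp
next
  case F1: False
  show ?thesis
  proof (cases "a = r - 1")
    case True
    have e: "((r-1)*i - 1) mod r = r - 1 - i"
      by (rule modeq[where q="i - 1"]) (use assms True in \<open>auto simp: algebra_simps\<close>)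
    have t1: "tau r a i = r - 1 - i"
      using True e tau_b2[of r i] by simp
    have m0: "(- r) mod (r-1) = r - 2"
      by (rule modeq[where q="-2"]) (use assms True F1 in \<open>auto simp: algebra_simps\<close>)
    have m: "(- r) mod a = a - 1"
      using True m0 by simp
    have e2: "((a-1)*i - 1) mod a = a - 1 - i"
      by (rule modeq[where q="i - 1"]) (use assms True F1 in \<open>auto simp: algebra_simps\<close>)
    have "tau a (a - 1) i = a - 1 - i"
      using e2 tau_b2[of a i] by simp
    then show ?thesis using True t1 m by simp
  next
    case False
    then show ?thesis using F1 assms tau_gen[of a r i] by simp
  qed
qed




lemma ab1:
  fixes a b r x :: int
  assumes "(a*b) mod r = 1 mod r"
  shows "(x*a*b) mod r = x mod r"
proof -
  have "(x*a*b) mod r = (x*(a*b)) mod r" by (simp add: ac_simps)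
  also have "\<dots> = (x*((a*b) mod r)) mod r" by (simp add: mod_mult_right_eq)
  also have "\<dots> = x mod r" using assms by (simp add: mod_mult_right_eq)
  finally show ?thesis .
qed

lemma bij_aff:
  fixes a b r c :: int
  assumes r: "0 < r" and b: "(a*b) mod r = 1 mod r"
  shows "bij_betw (\<lambda>m. (m*a + c) mod r) {0..<r} {0..<r}"
proof (rule bij_betw_byWitness[where f'="\<lambda>j. ((j - c)*b) mod r"])
  show "\<forall>m\<in>{0..<r}. ((((m*a + c) mod r) - c)*b) mod r = m"
  proof
    fix m assume m: "m \<in> {0..<r}"
    have "((((m*a + c) mod r) - c)*b) mod r = ((((m*a + c) mod r - c) mod r)*b) mod r"
      by (simp add: mod_mult_left_eq)
    also have "\<dots> = (((m*a + c - c) mod r)*b) mod r" by (simp add: mod_diff_left_eq)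
    also have "\<dots> = (m*a*b) mod r" by (simp add: mod_mult_left_eq)
    also have "\<dots> = m mod r" by (rule ab1[OF b])
    also have "\<dots> = m" using m by simp
    finally show "((((m*a + c) mod r) - c)*b) mod r = m" .
  qed
  show "\<forall>j\<in>{0..<r}. ((((j - c)*b) mod r)*a + c) mod r = j"
  proof
    fix j assume j: "j \<in> {0..<r}"
    have "((((j - c)*b) mod r)*a + c) mod r = (((((j - c)*b) mod r)*a) mod r + c) mod r"
      by (simp add: mod_add_left_eq)
    also have "(((j - c)*b) mod r)*a mod r = ((j - c)*b*a) mod r"
      by (simp add: mod_mult_left_eq)
    also have "\<dots> = ((j - c)*a*b) mod r" by (simp add: ac_simps)
    also have "\<dots> = (j - c) mod r" by (rule ab1[OF b])
    also have "((j - c) mod r + c) mod r = (j - c + c) mod r" by (simp add: mod_add_left_eq)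
    also have "\<dots> = j" using j by simp
    finally show "((((j - c)*b) mod r)*a + c) mod r = j" .
  qed
  show "(\<lambda>m. (m*a + c) mod r) ` {0..<r} \<subseteq> {0..<r}" using r by auto
  show "(\<lambda>j. ((j - c)*b) mod r) ` {0..<r} \<subseteq> {0..<r}" using r by auto
qed

lemma sum_aff:
  fixes a b r c :: int and g :: "int \<Rightarrow> int"
  assumes r: "0 < r" and b: "(a*b) mod r = 1 mod r"
  shows "(\<Sum>m\<in>{0..<r}. g ((m*a + c) mod r)) = (\<Sum>j\<in>{0..<r}. g j)"
  using sum.reindex_bij_betw[OF bij_aff[OF r b, of c], of g] by simp

lemma Xsys_unique:
  fixes r a :: int
  assumes r: "0 < r" and cop: "coprime a r" and X: "Xsys r a X" and X': "Xsys r a X'"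
  shows "X = X'"
proof (rule ext, rule ext)
  fix i l
  show "X i l = X' i l"
  proof (cases "0 \<le> i \<and> i < r")
    case True
    have "(\<lambda>j. X j l - X' j l) i = 0"
    proof (rule prop_full[OF r cop, where c=0 and Y="\<lambda>j. X j l - X' j l"])
      show "X 0 l - X' 0 l = 0" using X X' unfolding Xsys_def by simp
      fix j :: int assume j: "0 \<le> j" "j < r"
      have e1: "X j l + Zdiv r a ((j + 1) mod r) l = Zdiv r a j l + X ((j - a) mod r) l"
        using X j unfolding Xsys_def by blast
      have e2: "X' j l + Zdiv r a ((j + 1) mod r) l = Zdiv r a j l + X' ((j - a) mod r) l"
        using X' j unfolding Xsys_def by blast
      show "X j l - X' j l = X ((j - a) mod r) l - X' ((j - a) mod r) l"
        using e1 e2 by simp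
    qed (use True in auto)
    then show ?thesis by simp
  next
    case False
    then show ?thesis using X X' unfolding Xsys_def by simp
  qed
qed

lemma Xsys_exists:
  fixes r a :: int
  assumes r: "0 < r" and cop: "coprime a r"
  shows "\<exists>X. Xsys r a X"
proof -
  obtain b where b: "(a*b) mod r = 1 mod r" using inv_ex[OF cop] by blast
  define Z where "Z = Zdiv r a"
  define T where "T = (\<lambda>m l. Z ((m*a) mod r) l - Z ((m*a + 1) mod r) l)"
  define S where "S = (\<lambda>n l. \<Sum>m\<in>{1..n}. T m l)"
  define X where "X = (\<lambda>i. if 0 \<le> i \<and> i < r then (\<lambda>l. Ediv l + S ((i*b) mod r) l) else (\<lambda>l. 0))"
  have tot: "(\<Sum>m\<in>{0..<r}. T m l) = 0" for l
  proof -
    have "(\<Sum>m\<in>{0..<r}. Z ((m*a) mod r) l) = (\<Sum>j\<in>{0..<r}. Z j l)"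
      using sum_aff[OF r b, of "\<lambda>j. Z j l" 0] by simp
    moreover have "(\<Sum>m\<in>{0..<r}. Z ((m*a + 1) mod r) l) = (\<Sum>j\<in>{0..<r}. Z j l)"
      using sum_aff[OF r b, of "\<lambda>j. Z j l" 1] by simp
    ultimately show ?thesis unfolding T_def by (simp add: sum_subtractf)
  qed
  have Xsys: "Xsys r a X" unfolding Xsys_def
  proof (intro conjI allI impI)
    show "X 0 = Ediv" using r by (auto simp: X_def S_def)
  next
    fix i :: int assume "\<not> (0 \<le> i \<and> i < r)"
    then show "X i = (\<lambda>l. 0)" unfolding X_def by auto
  next
    fix i l :: _ assume i: "0 \<le> i \<and> i < r"
    define n where "n = (i*b) mod r"
    have n0: "0 \<le> n" "n < r" using r by (auto simp: n_def)
    have im: "i mod r = i" using i by simp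
    have na: "(n*a) mod r = i"
    proof -
      have "(n*a) mod r = (i*b*a) mod r" by (simp add: n_def mod_mult_left_eq)
      also have "\<dots> = (i*a*b) mod r" by (simp add: ac_simps)
      also have "\<dots> = i" using ab1[OF b, of i] im by simp
      finally show ?thesis .
    qed
    have na1: "(n*a + 1) mod r = (i + 1) mod r"
      using na by (metis mod_add_left_eq)
    have ia: "0 \<le> (i - a) mod r" "(i - a) mod r < r" using r by auto
    have n': "(((i - a) mod r)*b) mod r = (n - 1) mod r"
    proof -
      have eq: "(i - a)*b = i*b - a*b" by (simp add: algebra_simps)
      have "(((i - a) mod r)*b) mod r = ((i - a)*b) mod r" by (simp add: mod_mult_left_eq)
      also have "\<dots> = (i*b - a*b) mod r" unfolding eq ..
      also have "\<dots> = (i*b - (a*b) mod r) mod r" by (simp add: mod_diff_right_eq)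
      also have "\<dots> = (i*b - 1 mod r) mod r" using b by simp
      also have "\<dots> = (i*b - 1) mod r" by (simp add: mod_diff_right_eq)
      also have "\<dots> = (n - 1) mod r" by (simp add: n_def mod_diff_left_eq)
      finally show ?thesis .
    qed
    have Xi: "X i l = Ediv l + S n l" using i by (simp add: X_def n_def)
    have Xia: "X ((i - a) mod r) l = Ediv l + S ((n - 1) mod r) l"
      using ia n' by (simp add: X_def)
    show "X i l + Zdiv r a ((i + 1) mod r) l = Zdiv r a i l + X ((i - a) mod r) l"
    proof (cases "1 \<le> n")
      case True
      have nm: "(n - 1) mod r = n - 1" using True n0 by simp
      have "{1..n} = insert n {1..n-1}" using True by auto
      then have "S n l = T n l + S (n - 1) l" unfolding S_def by simp
      moreover have "T n l = Z i l - Z ((i + 1) mod r) l" unfolding T_def using na na1 by simp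
      ultimately show ?thesis using Xi Xia nm unfolding Z_def by simp
    next
      case False
      then have n00: "n = 0" using n0 by simp
      then have i0: "i = 0" using na r by simp
      have nm: "(n - 1) mod r = r - 1" using n00 neg_mod_eq[of 1 r] r
        by (cases "r = 1") auto
      have "{0..<r} = insert 0 {1..r-1}" using r by auto
      then have "(\<Sum>m\<in>{0..<r}. T m l) = T 0 l + S (r - 1) l" unfolding S_def by simp
      then have "S (r - 1) l = - T 0 l" using tot by simp
      moreover have "T 0 l = Z 0 l - Z (1 mod r) l" unfolding T_def by simp
      moreover have "S n l = 0" using n00 unfolding S_def by simp
      ultimately show ?thesis using Xi Xia nm i0 unfolding Z_def by simp
    qed
  qed
  then show ?thesis by blast
qed

lemma Xdiv_sys:
  fixes r a :: int
  assumes "0 < r" "coprime a r"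
  shows "Xsys r a (Xdiv r a)"
proof -
  obtain X where X: "Xsys r a X" using Xsys_exists[OF assms] by blast
  have "Xsys r a (THE X. Xsys r a X)"
    by (rule theI[of "Xsys r a" X]) (use X Xsys_unique[OF assms] in auto)
  then show ?thesis unfolding Xdiv_def .
qed




lemma Zdiv_E1: "Zdiv r a j E1 = 0" by (simp add: Zdiv_def)
lemma Zdiv_D: "Zdiv r a j (D k) = (if tau r a j + 1 \<le> k \<and> k \<le> r then 1 else 0)"
  by (simp add: Zdiv_def)

lemma Xsys_eq:
  assumes "Xsys r a X" "0 \<le> j" "j < r"
  shows "X j l = Zdiv r a j l - Zdiv r a ((j + 1) mod r) l + X ((j - a) mod r) l"
proof -
  have "X j l + Zdiv r a ((j + 1) mod r) l = Zdiv r a j l + X ((j - a) mod r) l"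
    using assms unfolding Xsys_def by blast
  then show ?thesis by simp
qed

lemma X_E1:
  fixes r a :: int
  assumes r: "0 < r" and cop: "coprime a r" and X: "Xsys r a X" and j: "0 \<le> j" "j < r"
  shows "X j E1 = 1"
proof -
  have "(\<lambda>j. X j E1) j = 1"
  proof (rule prop_full[OF r cop, where c=1 and Y="\<lambda>j. X j E1"])
    show "X 0 E1 = 1" using X unfolding Xsys_def by (simp add: Ediv_def)
    fix i :: int assume "0 \<le> i" "i < r"
    then show "X i E1 = X ((i - a) mod r) E1" using Xsys_eq[OF X, of i E1] by (simp add: Zdiv_E1)
  qed (use j in auto)
  then show ?thesis by simp
qed

lemma X_Dout:
  fixes r a :: int
  assumes r: "0 < r" and cop: "coprime a r" and X: "Xsys r a X" and k: "k < 1 \<or> r < k"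
  shows "X j (D k) = 0"
proof (cases "0 \<le> j \<and> j < r")
  case True
  have "(\<lambda>j. X j (D k)) j = 0"
  proof (rule prop_full[OF r cop, where c=0 and Y="\<lambda>j. X j (D k)"])
    show "X 0 (D k) = 0" using X unfolding Xsys_def by (simp add: Ediv_def)
    fix i :: int assume "0 \<le> i" "i < r"
    moreover have "Zdiv r a i (D k) = 0" "Zdiv r a ((i + 1) mod r) (D k) = 0"
      using tau_range[OF r, of a i] tau_range[OF r, of a "(i + 1) mod r"] k by (auto simp: Zdiv_D)
    ultimately show "X i (D k) = X ((i - a) mod r) (D k)" using Xsys_eq[OF X, of i "D k"] by simp
  qed (use True in auto)
  then show ?thesis by simp
next
  case False
  then show ?thesis using X unfolding Xsys_def by simp
qed

lemma cop_L:
  fixes r a :: int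
  assumes "0 < a" "a < r" "coprime a r"
  shows "coprime (r mod (r - a)) (r - a)"
proof -
  have "(r - a) mod r = (- a) mod r" by (metis add.commute diff_conv_add_uminus mod_add_self2)
  then have "coprime (r - a) r \<longleftrightarrow> coprime (- a) r"
    using assms coprime_mod_left_iff[of r "r - a"] coprime_mod_left_iff[of r "- a"] by simp
  then have "coprime (r - a) r" using assms by simp
  then have "coprime r (r - a)" by (simp add: ac_simps)
  then show ?thesis using assms by simp
qed

lemma cop_R:
  fixes r a :: int
  assumes "0 < a" "a < r" "coprime a r"
  shows "coprime ((- r) mod a) a"
proof -
  have "coprime r a" using assms by (simp add: ac_simps)
  then show ?thesis using assms by simp
qed




lemma main_L:
  fixes r a i :: int
  assumes a: "0 < a" "a < r" and cop: "coprime a r" and i: "0 \<le> i" "i \<le> r - 2"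
  shows "restrL r a (Xdiv r a i) = Xdiv (r - a) (r mod (r - a)) (i mod (r - a))"
proof -
  define s where "s = r - a"
  define a1 where "a1 = r mod s"
  define X where "X = Xdiv r a"
  define XL where "XL = Xdiv s a1"
  have s0: "0 < s" using a by (simp add: s_def)
  have r0: "0 < r" "1 < r" using a by auto
  have sX: "Xsys r a X" using Xdiv_sys[OF r0(1) cop] X_def by simp
  have copL: "coprime a1 s" using cop_L[OF a cop] by (simp add: a1_def s_def)
  have sL: "Xsys s a1 XL" using Xdiv_sys[OF s0 copL] XL_def by simp
  have h: "(\<lambda>j. (\<lambda>l. restrL r a (X j) l - XL (j mod s) l)) i = (\<lambda>l. 0)"
  proof (rule prop_exc[OF r0(2) a cop, where c="\<lambda>l. 0" and Y="\<lambda>j. (\<lambda>l. restrL r a (X j) l - XL (j mod s) l)"])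
    show "(\<lambda>l. restrL r a (X 0) l - XL (0 mod s) l) = (\<lambda>l. 0)"
    proof
      fix l show "restrL r a (X 0) l - XL (0 mod s) l = 0"
        using sX sL unfolding Xsys_def by (cases l) (auto simp: restrL_def Ediv_def)
    qed
    fix j assume j: "0 \<le> j" "j < r" "j \<noteq> r - 1" "j \<noteq> a - 1"
    show "(\<lambda>l. restrL r a (X j) l - XL (j mod s) l) = (\<lambda>l. restrL r a (X ((j - a) mod r)) l - XL (((j - a) mod r) mod s) l)"
    proof
      fix l
      show "restrL r a (X j) l - XL (j mod s) l = restrL r a (X ((j - a) mod r)) l - XL (((j - a) mod r) mod s) l"
      proof (cases l)
        case E1
        have "0 \<le> (j - a) mod r" "(j - a) mod r < r" using r0 by auto
        moreover have "0 \<le> j mod s" "j mod s < s" "0 \<le> ((j - a) mod r) mod s" "((j - a) mod r) mod s < s" using s0 by auto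
        ultimately show ?thesis using E1 X_E1[OF r0(1) cop sX] X_E1[OF s0 copL sL] j by (simp add: restrL_def)
      next
        case (D k)
        show ?thesis
        proof (cases "0 \<le> k \<and> k \<le> s")
          case False
          then have "XL (j mod s) (D k) = 0" "XL (((j - a) mod r) mod s) (D k) = 0"
            using X_Dout[OF s0 copL sL] by auto
          then show ?thesis using D False by (auto simp: restrL_def s_def)
        next
          case True
          have kk: "0 \<le> k" "k \<le> s" "k \<le> r - a" using True s_def by auto
          have jm1: "(j + 1) mod r = j + 1" using j by simp
          have eX: "X j (D k) = Zdiv r a j (D k) - Zdiv r a (j + 1) (D k) + X ((j - a) mod r) (D k)"
            using Xsys_eq[OF sX, of j "D k"] j jm1 by simp
          show ?thesis
          proof (cases "a \<le> j")
            case True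
            define jl where "jl = j mod s"
            have jl: "0 \<le> jl" "jl < s" using s0 by (auto simp: jl_def)
            have eL: "XL jl (D k) = Zdiv s a1 jl (D k) - Zdiv s a1 ((jl + 1) mod s) (D k) + XL ((jl - a1) mod s) (D k)"
              using Xsys_eq[OF sL jl, of "D k"] .
            have m1: "(jl - a1) mod s = ((j - a) mod r) mod s"
            proof -
              have "(j - a) mod r = j - a" by (intro mod_pos_pos_trivial) (use True j a in auto)
              moreover have "(jl - a1) mod s = (j - r) mod s" unfolding jl_def a1_def by (simp add: mod_diff_eq)
              moreover have "j - r = (j - a) + (-1) * s" by (simp add: s_def)
              ultimately show ?thesis by (metis mod_mult_self1)
            qed
            have m2: "(jl + 1) mod s = (j + 1) mod s" unfolding jl_def by (simp add: mod_add_left_eq)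
            have t1: "tau r a j = tau s a1 jl" using tau_L[OF a True] j by (simp add: s_def a1_def jl_def)
            have t2: "tau r a (j + 1) = tau s a1 ((j + 1) mod s)" using tau_L[OF a, of "j + 1"] True j by (simp add: s_def a1_def)
            have z1: "Zdiv r a j (D k) = Zdiv s a1 jl (D k)" using t1 kk a by (simp add: Zdiv_D s_def)
            have z2: "Zdiv r a (j + 1) (D k) = Zdiv s a1 ((jl + 1) mod s) (D k)" using t2 kk a m2 by (simp add: Zdiv_D s_def)
            have "X j (D k) - XL jl (D k) = X ((j - a) mod r) (D k) - XL (((j - a) mod r) mod s) (D k)"
              using eX eL z1 z2 m1 by simp
            then show ?thesis using D kk by (simp add: restrL_def jl_def)
          next
            case False
            have jm: "((j - a) mod r) mod s = j mod s"
            proof -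
              have "(j - a) mod r = j + s" using False j a by (simp add: s_def modeq[where q="-1"])
              then show ?thesis by simp
            qed
            have t1: "tau r a j = s + tau a ((- r) mod a) j" using tau_R[OF a] False j by (simp add: s_def)
            have t2: "tau r a (j + 1) = s + tau a ((- r) mod a) (j + 1)" using tau_R[OF a, of "j + 1"] False j by (simp add: s_def)
            have "0 \<le> tau a ((- r) mod a) j" "0 \<le> tau a ((- r) mod a) (j + 1)" using tau_range a by auto
            then have "Zdiv r a j (D k) = 0" "Zdiv r a (j + 1) (D k) = 0" using t1 t2 kk by (auto simp: Zdiv_D)
            then have "X j (D k) = X ((j - a) mod r) (D k)" using eX by simp
            then show ?thesis using jm D kk by (simp add: restrL_def)
          qed
        qed
      qed
    qed
  qed (use i in auto)
  have "restrL r a (X i) l = XL (i mod s) l" for l using fun_cong[OF h, of l] by simp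
  then show ?thesis by (auto simp: X_def XL_def s_def a1_def)
qed

lemma main_R:
  fixes r a i :: int
  assumes a: "0 < a" "a < r" and cop: "coprime a r" and i: "0 \<le> i" "i \<le> r - 2"
  shows "restrR r a (Xdiv r a i) = Xdiv a ((- r) mod a) (i mod a)"
proof -
  define s where "s = r - a"
  define a1 where "a1 = r mod s"
  define a2 where "a2 = (- r) mod a"
  define X where "X = Xdiv r a"
  define XR where "XR = Xdiv a a2"
  have s0: "0 < s" using a by (simp add: s_def)
  have r0: "0 < r" "1 < r" using a by auto
  have sX: "Xsys r a X" using Xdiv_sys[OF r0(1) cop] X_def by simp
  have copR: "coprime a2 a" using cop_R[OF a cop] by (simp add: a2_def)
  have sR: "Xsys a a2 XR" using Xdiv_sys[OF a(1) copR] XR_def by simp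
  have h: "(\<lambda>j. (\<lambda>l. restrR r a (X j) l - XR (j mod a) l)) i = (\<lambda>l. 0)"
  proof (rule prop_exc[OF r0(2) a cop, where c="\<lambda>l. 0" and Y="\<lambda>j. (\<lambda>l. restrR r a (X j) l - XR (j mod a) l)"])
    show "(\<lambda>l. restrR r a (X 0) l - XR (0 mod a) l) = (\<lambda>l. 0)"
    proof
      fix l show "restrR r a (X 0) l - XR (0 mod a) l = 0"
        using sX sR unfolding Xsys_def by (cases l) (auto simp: restrR_def Ediv_def)
    qed
    fix j assume j: "0 \<le> j" "j < r" "j \<noteq> r - 1" "j \<noteq> a - 1"
    show "(\<lambda>l. restrR r a (X j) l - XR (j mod a) l) = (\<lambda>l. restrR r a (X ((j - a) mod r)) l - XR (((j - a) mod r) mod a) l)"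
    proof
      fix l
      show "restrR r a (X j) l - XR (j mod a) l = restrR r a (X ((j - a) mod r)) l - XR (((j - a) mod r) mod a) l"
      proof (cases l)
        case E1
        have "0 \<le> (j - a) mod r" "(j - a) mod r < r" using r0 by auto
        moreover have "0 \<le> j mod a" "j mod a < a" "0 \<le> ((j - a) mod r) mod a" "((j - a) mod r) mod a < a" using a by auto
        ultimately show ?thesis using E1 X_E1[OF r0(1) cop sX] X_E1[OF a(1) copR sR] j by (simp add: restrR_def)
      next
        case (D k)
        show ?thesis
        proof (cases "0 \<le> k \<and> k \<le> a")
          case False
          then have "XR (j mod a) (D k) = 0" "XR (((j - a) mod r) mod a) (D k) = 0"
            using X_Dout[OF a(1) copR sR] by auto
          then show ?thesis using D False by (auto simp: restrR_def)
        next
          case True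
          define kk where "kk = r - a + k"
          have kk: "0 \<le> k" "k \<le> a" "s \<le> kk" "kk \<le> r" "kk = s + k" using True a by (auto simp: kk_def s_def)
          have jm1: "(j + 1) mod r = j + 1" using j by simp
          have eX: "X j (D kk) = Zdiv r a j (D kk) - Zdiv r a (j + 1) (D kk) + X ((j - a) mod r) (D kk)"
            using Xsys_eq[OF sX, of j "D kk"] j jm1 by simp
          show ?thesis
          proof (cases "a \<le> j")
            case True
            have ja: "(j - a) mod r = j - a" by (intro mod_pos_pos_trivial) (use True j a in auto)
            have m: "((j - a) mod r) mod a = j mod a" unfolding ja by simp
            have t1: "tau r a j = tau s a1 (j mod s)" using tau_L[OF a True] j by (simp add: s_def a1_def)
            have t2: "tau r a (j + 1) = tau s a1 ((j + 1) mod s)" using tau_L[OF a, of "j + 1"] True j by (simp add: s_def a1_def)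
            have "tau s a1 (j mod s) < s" "tau s a1 ((j + 1) mod s) < s" using tau_range[OF s0] by auto
            then have "Zdiv r a j (D kk) = 1" "Zdiv r a (j + 1) (D kk) = 1" using t1 t2 kk by (auto simp: Zdiv_D)
            then have "X j (D kk) = X ((j - a) mod r) (D kk)" using eX by simp
            then show ?thesis using m D True kk by (simp add: restrR_def kk_def)
          next
            case False
            have jr: "j mod a = j" using False j by simp
            have jsa: "(j - a) mod r = j + s" using False j a by (simp add: s_def modeq[where q="-1"])
            have m1: "(j - a2) mod a = ((j - a) mod r) mod a"
            proof -
              have "(j - a2) mod a = (j - (- r)) mod a" unfolding a2_def by (simp add: mod_diff_right_eq)
              moreover have "j - (- r) = (j + s) + 1 * a" by (simp add: s_def)
              ultimately show ?thesis unfolding jsa by (metis mod_mult_self1)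
            qed
            have ja: "0 \<le> j" "j < a" using j False by auto
            have j1a: "(j + 1) mod a = j + 1" using j False by simp
            have eR: "XR j (D k) = Zdiv a a2 j (D k) - Zdiv a a2 (j + 1) (D k) + XR ((j - a2) mod a) (D k)"
              using Xsys_eq[OF sR ja, of "D k"] j1a by simp
            have t1: "tau r a j = s + tau a a2 j" using tau_R[OF a] False j by (simp add: s_def a2_def)
            have t2: "tau r a (j + 1) = s + tau a a2 (j + 1)" using tau_R[OF a, of "j + 1"] False j by (simp add: s_def a2_def)
            have z1: "Zdiv r a j (D kk) = Zdiv a a2 j (D k)" using t1 kk by (simp add: Zdiv_D s_def)
            have z2: "Zdiv r a (j + 1) (D kk) = Zdiv a a2 (j + 1) (D k)" using t2 kk by (simp add: Zdiv_D s_def)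
            have "X j (D kk) - XR j (D k) = X ((j - a) mod r) (D kk) - XR (((j - a) mod r) mod a) (D k)"
              using eX eR z1 z2 m1 by simp
            then show ?thesis using D kk jr by (simp add: restrR_def kk_def)
          qed
        qed
      qed
    qed
  qed (use i in auto)
  have "restrR r a (X i) l = XR (i mod a) l" for l using fun_cong[OF h, of l] by simp
  then show ?thesis by (auto simp: X_def XR_def a2_def)
qed


theorem mainTheorem4:
  fixes r a i :: int
  assumes "0 < a" and "a < r" and "coprime a r"
    and "0 \<le> i" and "i \<le> r - 2"
  shows "restrL r a (Xdiv r a i) = Xdiv (r - a) (r mod (r - a)) (i mod (r - a)) \<and>
         restrR r a (Xdiv r a i) = Xdiv a ((- r) mod a) (i mod a)"
  using main_L[OF assms] main_R[OF assms] by blast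

end
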